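(* Assume (A1)–(A6) and (B1)–(B5). Let $y\in\mathbf K(\operatorname{dom}\mathcal R)$, let $\delta_n>0$ with $\delta_n\to0$, let $y_n\in\mathbb Y$ with $\mathcal D(y,y_n)\le\delta_n$, choose $\alpha_n>0$ with $\alpha_n\to0$ and $\delta_n/\alpha_n\to0$, and let $x_n\in\operatorname{arg\,min}\mathcal A_{\alpha_n,y_n}$. Then: (a) $(x_n)$ has at least one weakly convergent subsequence; (b) every weak accumulation point of $(x_n)$ is an $\mathcal R$-minimizing solution of $\mathbf Kx=y$; (c) for every weakly convergent subsequence $x_{\tau(n)}\rightharpoonup x_\star$ one has $\mathcal R(x_{\tau(n)})\to\mathcal R(x_\star)$; (d) if the $\mathcal R$-minimizing solution $x^\ddagger$ of $\mathbf Kx=y$ is unique, then $x_n\rightharpoonup x^\ddagger$.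
   Context: Standing assumptions (A1)–(A6): (A1) $\mathbb X,\mathbb Y$ real Hilbert spaces; (A2) $\Xi=\ell^2(\Lambda)$, $\Lambda$ countable; (A3) $\mathbf K\colon\mathbb X\to\mathbb Y$ weakly sequentially continuous; (A4) $\mathbf E\colon\mathbb X\to\Xi$ weakly sequentially continuous; (A5) $\mathbf D\colon\Xi\to\mathbb X$ weakly sequentially continuous; (A6) $\psi\colon\Xi\to[0,\infty]$ coercive (bounded values force bounded sequences) and weakly sequentially lower semicontinuous. Fix $c>0$ and set $\mathcal R(x)=\psi(\mathbf E(x))+\frac c2\|x-\mathbf D(\mathbf E(x))\|^2$, $\operatorname{dom}\mathcal R=\{x:\mathcal R(x)<\infty\}$, and $\mathcal A_{\alpha,y}(x)=\mathcal D(\mathbf Kx,y)+\alpha\mathcal R(x)$. An $\mathcal R$-minimizing solution of $\mathbf Kx=y$ is an element of $\operatorname{arg\,min}\{\mathcal R(x): x\in\operatorname{dom}\mathcal R,\ \mathbf Kx=y\}$. Similarity measure $\mathcal D\colon\mathbb Y\times\mathbb Y\to[0,\infty]$ with: (B1) $\mathcal D(y_0,y_1)=0\iff y_0=y_1$; (B2) sequential lower semicontinuity w.r.t. the weak topology in the first and the norm topology in the second argument; (B3) $\mathcal D(y,y_n)\to0\Rightarrow y_n\to y$; (B4) if $\mathcal D(y,y_n)\to0$ then $\mathcal D(z,y_n)\to\mathcal D(z,y)$ for every $z$ with $\mathcal D(z,y)<\infty$; (B5) for all $y$, $\alpha>0$ there is $x$ with $\mathcal A_{\alpha,y}(x)<\infty$.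 *)

theory Defs
  imports "HOL-Analysis.Analysis"
begin

definition weak_conv :: "(nat \<Rightarrow> 'a::real_inner) \<Rightarrow> 'a \<Rightarrow> bool" where
  "weak_conv xs x \<longleftrightarrow> (\<forall>z. (\<lambda>n. inner (xs n) z) \<longlonglongrightarrow> inner x z)"

definition weak_seq_cont :: "('a::real_inner \<Rightarrow> 'b::real_inner) \<Rightarrow> bool" where
  "weak_seq_cont F \<longleftrightarrow> (\<forall>xs x. weak_conv xs x \<longrightarrow> weak_conv (\<lambda>n. F (xs n)) (F x))"

definition weak_seq_lsc :: "('a::real_inner \<Rightarrow> ennreal) \<Rightarrow> bool" where
  "weak_seq_lsc f \<longleftrightarrow> (\<forall>xs x. weak_conv xs x \<longrightarrow> f x \<le> liminf (\<lambda>n. f (xs n)))"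

definition coercive_fun :: "('a::real_normed_vector \<Rightarrow> ennreal) \<Rightarrow> bool" where
  "coercive_fun f \<longleftrightarrow> (\<forall>xs. (\<exists>C::real. \<forall>n::nat. f (xs n) \<le> ennreal C) \<longrightarrow> (\<exists>M. \<forall>n. norm (xs n) \<le> M))"

definition weak_acc_point :: "(nat \<Rightarrow> 'a::real_inner) \<Rightarrow> 'a \<Rightarrow> bool" where
  "weak_acc_point xs x \<longleftrightarrow> (\<exists>\<tau>. strict_mono \<tau> \<and> weak_conv (xs \<circ> \<tau>) x)"

definition regR :: "('c \<Rightarrow> ennreal) \<Rightarrow> ('a \<Rightarrow> 'c) \<Rightarrow> ('c \<Rightarrow> 'a::real_normed_vector) \<Rightarrow> real \<Rightarrow> 'a \<Rightarrow> ennreal" where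
  "regR \<psi> E Dec c x = \<psi> (E x) + ennreal (c / 2 * (norm (x - Dec (E x)))\<^sup>2)"

definition domR :: "('c \<Rightarrow> ennreal) \<Rightarrow> ('a \<Rightarrow> 'c) \<Rightarrow> ('c \<Rightarrow> 'a::real_normed_vector) \<Rightarrow> real \<Rightarrow> 'a set" where
  "domR \<psi> E Dec c = {x. regR \<psi> E Dec c x < \<infinity>}"

definition tikh :: "('y \<Rightarrow> 'y \<Rightarrow> ennreal) \<Rightarrow> ('a \<Rightarrow> 'y) \<Rightarrow> ('c \<Rightarrow> ennreal) \<Rightarrow> ('a \<Rightarrow> 'c)
    \<Rightarrow> ('c \<Rightarrow> 'a::real_normed_vector) \<Rightarrow> real \<Rightarrow> real \<Rightarrow> 'y \<Rightarrow> 'a \<Rightarrow> ennreal" where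
  "tikh Dist K \<psi> E Dec c \<alpha> y x = Dist (K x) y + ennreal \<alpha> * regR \<psi> E Dec c x"

definition argmin :: "('a \<Rightarrow> ennreal) \<Rightarrow> 'a set" where
  "argmin f = {x. \<forall>z. f x \<le> f z}"

definition R_min_sol :: "('a \<Rightarrow> 'y) \<Rightarrow> ('c \<Rightarrow> ennreal) \<Rightarrow> ('a \<Rightarrow> 'c) \<Rightarrow> ('c \<Rightarrow> 'a::real_normed_vector)
    \<Rightarrow> real \<Rightarrow> 'y \<Rightarrow> 'a \<Rightarrow> bool" where
  "R_min_sol K \<psi> E Dec c y x \<longleftrightarrow>
     x \<in> domR \<psi> E Dec c \<and> K x = y \<and>
     (\<forall>z. z \<in> domR \<psi> E Dec c \<and> K z = y \<longrightarrow> regR \<psi> E Dec c x \<le> regR \<psi> E Dec c z)"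

end

theory Submission imports Defs "HOL-Library.Diagonal_Subsequence"
begin

lemma parallelogram_norm:
  fixes a b :: "'a::real_inner"
  shows "(norm (a - b))\<^sup>2 + (norm (a + b))\<^sup>2 = 2 * (norm a)\<^sup>2 + 2 * (norm b)\<^sup>2"
  by (simp add: power2_norm_eq_inner inner_add_left inner_add_right inner_diff_left inner_diff_right inner_commute)

lemma norm_add_scale_sq:
  fixes x s :: "'a::real_inner"
  shows "(norm (x + t *\<^sub>R s))\<^sup>2 = (norm x)\<^sup>2 + 2 * t * inner x s + t\<^sup>2 * (norm s)\<^sup>2"
  unfolding power2_norm_eq_inner
  by (simp add: inner_add_left inner_add_right inner_commute power2_eq_square algebra_simps)

lemma quad_nonneg_zero:
  fixes a b :: real
  assumes "b \<ge> 0" "\<And>t. 2 * t * a + t\<^sup>2 * b \<ge> 0"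
  shows "a = 0"
proof -
  define t where "t = - a / (b + 2)"
  have "2 * t * a + t\<^sup>2 * b \<ge> 0" by (rule assms(2))
  hence "(b+2)^2 * (2 * t * a + t\<^sup>2 * b) \<ge> 0" by simp
  moreover have "(b+2)^2 * (2 * t * a + t\<^sup>2 * b) = - (a\<^sup>2 * (b + 4))"
  proof -
    have nz: "b + 2 \<noteq> 0" using assms(1) by simp
    have "(b+2)^2 * (2 * t * a + t\<^sup>2 * b) = 2 * a * (t * (b+2)) * (b+2) + (t*(b+2))\<^sup>2 * b"
      by (simp add: power2_eq_square algebra_simps)
    also have "t * (b+2) = - a" using nz by (simp add: t_def)
    finally show ?thesis by (simp add: power2_eq_square algebra_simps)
  qed
  ultimately have "a\<^sup>2 * (b+4) \<le> 0" by linarith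
  moreover have "b + 4 > 0" using assms(1) by simp
  ultimately have "a\<^sup>2 \<le> 0" by (simp add: mult_le_0_iff)
  thus ?thesis by simp
qed

lemma riesz_sub:
  fixes S :: "'a::{real_inner,complete_space} set" and f :: "'a \<Rightarrow> real"
  assumes sub: "subspace S" and cl: "closed S"
    and add: "\<And>a b. a \<in> S \<Longrightarrow> b \<in> S \<Longrightarrow> f (a + b) = f a + f b"
    and scal: "\<And>a r. a \<in> S \<Longrightarrow> f (r *\<^sub>R a) = r * f a"
    and bnd: "\<And>a. a \<in> S \<Longrightarrow> \<bar>f a\<bar> \<le> B * norm a"
  shows "\<exists>x\<in>S. \<forall>s\<in>S. inner x s = f s"
proof -
  define B' where "B' = max B 0"
  have bnd': "\<bar>f a\<bar> \<le> B' * norm a" if "a \<in> S" for a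
  proof -
    have "B * norm a \<le> B' * norm a" by (rule mult_right_mono) (simp_all add: B'_def)
    thus ?thesis using bnd[OF that] by linarith
  qed
  have zS: "0 \<in> S" using sub by (simp add: subspace_0)
  have diff: "f (a - b) = f a - f b" if "a \<in> S" "b \<in> S" for a b
  proof -
    have "(-1) *\<^sub>R b \<in> S" using sub that by (simp add: subspace_neg)
    hence "f (a + (-1) *\<^sub>R b) = f a + f ((-1) *\<^sub>R b)" using add that by blast
    thus ?thesis using scal[OF that(2), of "-1"] by simp
  qed
  define \<Phi> where "\<Phi> s = (norm s)\<^sup>2 - 2 * f s" for s
  have lowb: "\<Phi> s \<ge> - B'\<^sup>2" if "s \<in> S" for s
  proof -
    have "f s \<le> B' * norm s" using bnd'[OF that] by linarith
    moreover have "(norm s - B')\<^sup>2 \<ge> 0" by simp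
    ultimately show ?thesis unfolding \<Phi>_def by (simp add: power2_eq_square algebra_simps)
  qed
  define m where "m = Inf (\<Phi> ` S)"
  have bdd: "bdd_below (\<Phi> ` S)" using lowb by (auto intro!: bdd_belowI[of _ "- B'\<^sup>2"])
  have mle: "m \<le> \<Phi> s" if "s \<in> S" for s
    unfolding m_def using bdd that by (simp add: cInf_lower)
  have "\<exists>s\<in>S. \<Phi> s < m + 1 / Suc k" for k
  proof -
    have "Inf (\<Phi> ` S) < m + 1 / Suc k" unfolding m_def by simp
    then obtain v where "v \<in> \<Phi> ` S" "v < m + 1 / Suc k"
      using cInf_lessD[of "\<Phi> ` S"] zS by blast
    thus ?thesis by auto
  qed
  hence "\<forall>k. \<exists>s. s \<in> S \<and> \<Phi> s < m + 1 / Suc k" by blast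
  then obtain s where s: "\<forall>k. s k \<in> S \<and> \<Phi> (s k) < m + 1 / Suc k"
    using choice[of "\<lambda>k s. s \<in> S \<and> \<Phi> s < m + 1 / Suc k"] by blast
  hence sS: "\<And>k. s k \<in> S" and sm: "\<And>k. \<Phi> (s k) < m + 1 / Suc k" by auto
  have key: "(norm (a - b))\<^sup>2 \<le> 2 * \<Phi> a + 2 * \<Phi> b - 4 * m" if "a \<in> S" "b \<in> S" for a b
  proof -
    have abS: "(1/2) *\<^sub>R (a + b) \<in> S" using sub that by (simp add: subspace_add subspace_mul)
    have "m \<le> \<Phi> ((1/2) *\<^sub>R (a + b))" by (rule mle[OF abS])
    also have "\<Phi> ((1/2) *\<^sub>R (a + b)) = (norm (a + b))\<^sup>2 / 4 - (f a + f b)"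
      unfolding \<Phi>_def using scal[of "a + b" "1/2"] add[OF that] sub that
      by (simp add: subspace_add power2_eq_square)
    finally have "m \<le> (norm (a + b))\<^sup>2 / 4 - (f a + f b)" .
    hence "4 * m \<le> (norm (a + b))\<^sup>2 - 4 * (f a + f b)" by (simp add: field_simps)
    thus ?thesis using parallelogram_norm[of a b] unfolding \<Phi>_def by (smt (verit))
  qed
  have sq: "(norm (s i - s j))\<^sup>2 \<le> 2 / Suc i + 2 / Suc j" for i j
  proof -
    have "(norm (s i - s j))\<^sup>2 \<le> 2 * \<Phi> (s i) + 2 * \<Phi> (s j) - 4 * m" by (rule key[OF sS sS])
    thus ?thesis using sm[of i] sm[of j] by linarith
  qed
  have "Cauchy s"
  proof (rule metric_CauchyI)
    fix e :: real assume e: "e > 0"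
    obtain N :: nat where N: "4 / e\<^sup>2 < N" using reals_Archimedean2 by blast
    have "4 / e\<^sup>2 > 0" using e by simp
    hence "real N > 0" using N by linarith
    hence Npos: "N > 0" by simp
    show "\<exists>M. \<forall>i\<ge>M. \<forall>j\<ge>M. dist (s i) (s j) < e"
    proof (intro exI allI impI)
      fix i j assume ij: "N \<le> i" "N \<le> j"
      have "2 / real (Suc i) \<le> 2 / N" using ij Npos by (intro divide_left_mono) auto
      moreover have "2 / real (Suc j) \<le> 2 / N" using ij Npos by (intro divide_left_mono) auto
      moreover have "4 / N < e\<^sup>2" using N e Npos by (simp add: field_simps)
      ultimately have "(norm (s i - s j))\<^sup>2 < e\<^sup>2" using sq[of i j] by simp
      hence "norm (s i - s j) < e" using e by (simp add: power_less_imp_less_base)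
      thus "dist (s i) (s j) < e" by (simp add: dist_norm)
    qed
  qed
  then obtain x where sx: "s \<longlonglongrightarrow> x" using Cauchy_convergent_iff convergent_def by blast
  have xS: "x \<in> S" using cl sS sx closed_sequentially by blast
  have fconv: "(\<lambda>k. f (s k)) \<longlonglongrightarrow> f x"
  proof -
    have nz: "(\<lambda>k. norm (s k - x)) \<longlonglongrightarrow> 0"
      using sx by (simp add: LIM_zero_iff tendsto_norm_zero_iff)
    have "(\<lambda>k. B' * norm (s k - x)) \<longlonglongrightarrow> B' * 0"
      by (rule tendsto_mult[OF tendsto_const nz])
    hence lim0: "(\<lambda>k. B' * norm (s k - x)) \<longlonglongrightarrow> 0" by simp
    have le: "norm (f (s k) - f x) \<le> B' * norm (s k - x)" for k
    proof -
      have skx: "s k - x \<in> S" using sub sS xS by (rule subspace_diff)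
      have "f (s k - x) = f (s k) - f x" by (rule diff[OF sS xS])
      thus ?thesis using bnd'[OF skx] by simp
    qed
    have "(\<lambda>k. f (s k) - f x) \<longlonglongrightarrow> 0"
      by (rule Lim_null_comparison[OF _ lim0]) (use le in \<open>simp add: always_eventually\<close>)
    thus ?thesis by (simp add: LIM_zero_iff)
  qed
  have "(\<lambda>k. \<Phi> (s k)) \<longlonglongrightarrow> \<Phi> x"
    unfolding \<Phi>_def using sx fconv by (intro tendsto_intros)
  moreover have "(\<lambda>k. \<Phi> (s k)) \<longlonglongrightarrow> m"
  proof (rule tendsto_sandwich[where f="\<lambda>k. m" and h="\<lambda>k. m + 1 / Suc k"])
    show "\<forall>\<^sub>F k in sequentially. m \<le> \<Phi> (s k)" using mle sS by simp
    show "\<forall>\<^sub>F k in sequentially. \<Phi> (s k) \<le> m + 1 / Suc k" using sm by (simp add: less_imp_le)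
    show "(\<lambda>k. m + 1 / real (Suc k)) \<longlonglongrightarrow> m"
      using tendsto_add[OF tendsto_const LIMSEQ_inverse_real_of_nat, of m] by (simp add: inverse_eq_divide)
  qed simp
  ultimately have Phix: "\<Phi> x = m" using LIMSEQ_unique by blast
  show ?thesis
  proof (intro bexI[OF _ xS] ballI)
    fix v assume vS: "v \<in> S"
    have "2 * t * (inner x v - f v) + t\<^sup>2 * (norm v)\<^sup>2 \<ge> 0" for t
    proof -
      have tv: "x + t *\<^sub>R v \<in> S" using sub xS vS by (simp add: subspace_add subspace_mul)
      have "\<Phi> x \<le> \<Phi> (x + t *\<^sub>R v)" using mle[OF tv] Phix by simp
      moreover have "f (x + t *\<^sub>R v) = f x + t * f v" using add[OF xS] scal[OF vS] sub vS
        by (simp add: subspace_mul)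
      ultimately show ?thesis unfolding \<Phi>_def norm_add_scale_sq by (simp add: algebra_simps)
    qed
    thus "inner x v = f v" using quad_nonneg_zero[of "(norm v)\<^sup>2" "inner x v - f v"] by simp
  qed
qed

lemma diag_inner:
  fixes u :: "nat \<Rightarrow> 'a::real_inner"
  assumes bd: "\<And>n. norm (u n) \<le> M"
  shows "\<exists>\<sigma>. strict_mono \<sigma> \<and> (\<forall>k. convergent (\<lambda>n. inner (u (\<sigma> n)) (u k)))"
proof -
  interpret subseqs "\<lambda>k s. convergent (\<lambda>n. inner (u (s n)) (u k))"
  proof unfold_locales
    fix k and s :: "nat \<Rightarrow> nat" assume "strict_mono s"
    have "norm (inner (u (s n)) (u k)) \<le> M * norm (u k)" for n
    proof -
      have "norm (inner (u (s n)) (u k)) \<le> norm (u (s n)) * norm (u k)"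
        using Cauchy_Schwarz_ineq2 by simp
      also have "\<dots> \<le> M * norm (u k)" using bd by (simp add: mult_right_mono)
      finally show ?thesis .
    qed
    hence "bounded (range (\<lambda>n. inner (u (s n)) (u k)))"
      unfolding bounded_iff by blast
    then obtain l r where "strict_mono r" "((\<lambda>n. inner (u (s n)) (u k)) \<circ> r) \<longlonglongrightarrow> l"
      using bounded_imp_convergent_subsequence by blast
    thus "\<exists>r'. strict_mono r' \<and> convergent (\<lambda>n. inner (u ((s \<circ> r') n)) (u k))"
      by (auto simp: convergent_def o_def)
  qed
  have "convergent (\<lambda>n. inner (u (diagseq n)) (u k))" for k
  proof -
    have "convergent (\<lambda>n. inner (u ((diagseq \<circ> (+) (Suc k)) n)) (u k))"
    proof (rule diagseq_holds)
      fix r s n assume r: "strict_mono (r :: nat \<Rightarrow> nat)" and c: "convergent (\<lambda>m. inner (u (s m)) (u n))"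
      then obtain L where "(\<lambda>m. inner (u (s m)) (u n)) \<longlonglongrightarrow> L" by (auto simp: convergent_def)
      from LIMSEQ_subseq_LIMSEQ[OF this r]
      show "convergent (\<lambda>m. inner (u ((s \<circ> r) m)) (u n))" by (auto simp: convergent_def o_def)
    qed
    then obtain L where "(\<lambda>n. inner (u (diagseq (n + Suc k))) (u k)) \<longlonglongrightarrow> L"
      by (auto simp: convergent_def o_def add.commute)
    hence "(\<lambda>n. inner (u (diagseq n)) (u k)) \<longlonglongrightarrow> L" by (rule LIMSEQ_offset)
    thus ?thesis by (auto simp: convergent_def)
  qed
  thus ?thesis using subseq_diagseq by blast
qed

lemma weak_compact:
  fixes u :: "nat \<Rightarrow> 'a::{real_inner,complete_space}"
  assumes bd: "\<And>n. norm (u n) \<le> M"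
  shows "\<exists>\<sigma> x. strict_mono \<sigma> \<and> weak_conv (u \<circ> \<sigma>) x"
proof -
  obtain \<sigma> where \<sigma>: "strict_mono \<sigma>" and cv: "\<And>k. convergent (\<lambda>n. inner (u (\<sigma> n)) (u k))"
    using diag_inner[of u M] bd by blast
  define v where "v = u \<circ> \<sigma>"
  have vb: "norm (v n) \<le> M" for n unfolding v_def using bd by simp
  have M0: "M \<ge> 0" using bd[of 0] norm_ge_zero[of "u 0"] by linarith
  define G where "G = {z. convergent (\<lambda>n. inner (v n) z)}"
  have vG: "v n \<in> G" for n unfolding G_def v_def using cv by simp
  have g1: "convergent (\<lambda>n. inner (v n) (a + b))"
    if "convergent (\<lambda>n. inner (v n) a)" "convergent (\<lambda>n. inner (v n) b)" for a b
    using that by (simp add: inner_add_right convergent_add)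
  have g2: "convergent (\<lambda>n. inner (v n) (c *\<^sub>R a))" if ca: "convergent (\<lambda>n. inner (v n) a)" for c a
  proof -
    obtain L where "(\<lambda>n. inner (v n) a) \<longlonglongrightarrow> L" using ca by (auto simp: convergent_def)
    hence "(\<lambda>n. c * inner (v n) a) \<longlonglongrightarrow> c * L" by (intro tendsto_intros)
    thus ?thesis by (auto simp: convergent_def)
  qed
  have subG: "subspace G"
    unfolding subspace_def G_def using g1 g2 by (auto simp: convergent_const)
  have clG: "closed G"
  proof (unfold closed_sequential_limits, intro allI impI, elim conjE)
    fix zs z assume zsG: "\<forall>k. zs k \<in> G" and zl: "zs \<longlonglongrightarrow> z"
    have "Cauchy (\<lambda>n. inner (v n) z)"
    proof (rule metric_CauchyI)
      fix e :: real assume e: "e > 0"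
      have "\<forall>\<^sub>F k in sequentially. dist (zs k) z < e / (3 * (M + 1))"
        using zl e M0 by (intro tendstoD) auto
      then obtain k where k: "dist (zs k) z < e / (3 * (M + 1))" 
        by (meson eventually_sequentially order.refl)
      have "Cauchy (\<lambda>n. inner (v n) (zs k))" using zsG by (simp add: G_def Cauchy_convergent_iff)
      then obtain N where N: "\<And>i j. i \<ge> N \<Longrightarrow> j \<ge> N \<Longrightarrow> dist (inner (v i) (zs k)) (inner (v j) (zs k)) < e / 3"
        using e metric_CauchyD[of _ "e/3"] by (metis zero_less_divide_iff zero_less_numeral)
      have aux: "\<bar>inner (v i) z - inner (v i) (zs k)\<bar> \<le> e / 3" for i
      proof -
        have "\<bar>inner (v i) z - inner (v i) (zs k)\<bar> = \<bar>inner (v i) (z - zs k)\<bar>" by (simp add: inner_diff_right)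
        also have "\<dots> \<le> norm (v i) * norm (z - zs k)" by (rule Cauchy_Schwarz_ineq2)
        also have "\<dots> \<le> (M + 1) * (e / (3 * (M + 1)))"
        proof (rule mult_mono)
          show "norm (v i) \<le> M + 1" using vb[of i] by simp
          show "norm (z - zs k) \<le> e / (3 * (M + 1))" using k by (simp add: dist_norm norm_minus_commute)
        qed (use M0 in auto)
        also have "\<dots> = e / 3" using M0 by (simp add: field_simps)
        finally show ?thesis .
      qed
      show "\<exists>N. \<forall>i\<ge>N. \<forall>j\<ge>N. dist (inner (v i) z) (inner (v j) z) < e"
      proof (intro exI allI impI)
        fix i j assume "N \<le> i" "N \<le> j"
        hence "dist (inner (v i) (zs k)) (inner (v j) (zs k)) < e / 3" using N by blast
        thus "dist (inner (v i) z) (inner (v j) z) < e" using aux[of i] aux[of j]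
          unfolding dist_real_def by linarith
      qed
    qed
    thus "z \<in> G" by (simp add: G_def Cauchy_convergent_iff)
  qed
  define f where "f z = lim (\<lambda>n. inner (v n) z)" for z
  have flim: "(\<lambda>n. inner (v n) z) \<longlonglongrightarrow> f z" if "z \<in> G" for z
    using that unfolding G_def f_def by (simp add: convergent_LIMSEQ_iff)
  have "\<exists>x\<in>G. \<forall>s\<in>G. inner x s = f s"
  proof (rule riesz_sub[OF subG clG])
    fix a b assume ab: "a \<in> G" "b \<in> G"
    have "(\<lambda>n. inner (v n) (a + b)) \<longlonglongrightarrow> f a + f b"
      using tendsto_add[OF flim[OF ab(1)] flim[OF ab(2)]] by (simp add: inner_add_right)
    thus "f (a + b) = f a + f b" unfolding f_def by (rule limI)
  next
    fix a r assume a: "a \<in> G"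
    have "(\<lambda>n. inner (v n) (r *\<^sub>R a)) \<longlonglongrightarrow> r * f a"
      using tendsto_mult[OF tendsto_const flim[OF a], of r] by simp
    thus "f (r *\<^sub>R a) = r * f a" unfolding f_def by (rule limI)
  next
    fix a assume a: "a \<in> G"
    have "\<bar>inner (v n) a\<bar> \<le> M * norm a" for n
      using Cauchy_Schwarz_ineq2[of "v n" a] vb[of n] by (smt (verit) mult_right_mono norm_ge_zero)
    thus "\<bar>f a\<bar> \<le> M * norm a"
      using tendsto_rabs[OF flim[OF a]] by (intro LIMSEQ_le_const2) auto
  qed
  then obtain x where xG: "x \<in> G" and xf: "\<And>s. s \<in> G \<Longrightarrow> inner x s = f s" by blast
  have "weak_conv v x"
    unfolding weak_conv_def
  proof
    fix z
    have "\<exists>p\<in>G. \<forall>s\<in>G. inner p s = inner z s"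
    proof (rule riesz_sub[OF subG clG, where B="norm z"])
      show "\<And>a b. inner z (a + b) = inner z a + inner z b" by (simp add: inner_add_right)
      show "\<And>a r. inner z (r *\<^sub>R a) = r * inner z a" by simp
      show "\<And>a. \<bar>inner z a\<bar> \<le> norm z * norm a" by (rule Cauchy_Schwarz_ineq2)
    qed
    then obtain p where pG: "p \<in> G" and pz: "\<And>s. s \<in> G \<Longrightarrow> inner p s = inner z s" by blast
    have eq: "inner (v n) z = inner (v n) p" for n
      using pz[OF vG[of n]] by (simp add: inner_commute)
    have "f p = inner x z" using xf[OF pG] pz[OF xG] by (simp add: inner_commute)
    thus "(\<lambda>n. inner (v n) z) \<longlonglongrightarrow> inner x z" using flim[OF pG] eq by simp
  qed
  thus ?thesis using \<sigma> unfolding v_def by blast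
qed

lemma weak_conv_subseq:
  assumes "weak_conv xs x" "strict_mono r"
  shows "weak_conv (xs \<circ> r) x"
  using assms unfolding weak_conv_def
  using LIMSEQ_subseq_LIMSEQ[of _ _ r] by (auto simp: o_def)

lemma weak_conv_add:
  assumes "weak_conv a x" "weak_conv b y"
  shows "weak_conv (\<lambda>n. a n + b n) (x + y)"
  using assms unfolding weak_conv_def by (auto simp: inner_add_left intro: tendsto_add)

lemma weak_conv_diff:
  assumes "weak_conv a x" "weak_conv b y"
  shows "weak_conv (\<lambda>n. a n - b n) (x - y)"
  using assms unfolding weak_conv_def by (auto simp: inner_diff_left intro: tendsto_diff)

lemma weak_norm_lsc:
  fixes w :: "nat \<Rightarrow> 'a::real_inner"
  assumes wc: "weak_conv w a" and c: "c \<ge> 0"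
  shows "ennreal (c / 2 * (norm a)\<^sup>2) \<le> liminf (\<lambda>n. ennreal (c / 2 * (norm (w n))\<^sup>2))"
proof -
  define g where "g n = c / 2 * (2 * inner (w n) a - (norm a)\<^sup>2)" for n
  have "(\<lambda>n. inner (w n) a) \<longlonglongrightarrow> inner a a" using wc unfolding weak_conv_def by blast
  hence "g \<longlonglongrightarrow> c / 2 * (2 * inner a a - (norm a)\<^sup>2)"
    unfolding g_def by (intro tendsto_mult[OF tendsto_const] tendsto_diff[OF _ tendsto_const] tendsto_mult[OF tendsto_const])
  hence "g \<longlonglongrightarrow> c / 2 * (norm a)\<^sup>2" by (simp add: power2_norm_eq_inner)
  hence "(\<lambda>n. ennreal (g n)) \<longlonglongrightarrow> ennreal (c / 2 * (norm a)\<^sup>2)" by (rule tendsto_ennrealI)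
  hence "liminf (\<lambda>n. ennreal (g n)) = ennreal (c / 2 * (norm a)\<^sup>2)"
    by (simp add: lim_imp_Liminf)
  moreover have "ennreal (g n) \<le> ennreal (c / 2 * (norm (w n))\<^sup>2)" for n
  proof -
    have "0 \<le> (norm (w n - a))\<^sup>2" by simp
    also have "(norm (w n - a))\<^sup>2 = (norm (w n))\<^sup>2 - 2 * inner (w n) a + (norm a)\<^sup>2"
      unfolding power2_norm_eq_inner by (simp add: inner_diff_left inner_diff_right inner_commute)
    finally have "2 * inner (w n) a - (norm a)\<^sup>2 \<le> (norm (w n))\<^sup>2" by simp
    hence "g n \<le> c / 2 * (norm (w n))\<^sup>2" unfolding g_def using c by (simp add: mult_left_mono)
    thus ?thesis by (rule ennreal_leI)
  qed
  hence "liminf (\<lambda>n. ennreal (g n)) \<le> liminf (\<lambda>n. ennreal (c / 2 * (norm (w n))\<^sup>2))"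
    by (intro Liminf_mono) auto
  ultimately show ?thesis by simp
qed

lemma liminf_add_ennreal:
  fixes f g :: "nat \<Rightarrow> ennreal"
  shows "liminf f + liminf g \<le> liminf (\<lambda>n. f n + g n)"
proof -
  have inc: "incseq (\<lambda>n. INF m\<in>{n..}. h m)" for h :: "nat \<Rightarrow> ennreal"
    by (rule incseq_SucI) (auto intro!: INF_superset_mono)
  have "liminf f + liminf g = (SUP n. (INF m\<in>{n..}. f m) + (INF m\<in>{n..}. g m))"
    unfolding liminf_SUP_INF using ennreal_SUP_add[OF inc inc] by simp
  also have "\<dots> \<le> (SUP n. INF m\<in>{n..}. f m + g m)"
    by (intro SUP_mono) (auto intro!: INF_greatest add_mono INF_lower)
  also have "\<dots> = liminf (\<lambda>n. f n + g n)" unfolding liminf_SUP_INF ..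
  finally show ?thesis .
qed

lemma not_tendsto_subseq:
  fixes X :: "nat \<Rightarrow> real"
  assumes "\<not> X \<longlonglongrightarrow> L"
  shows "\<exists>e>0. \<exists>r::nat\<Rightarrow>nat. strict_mono r \<and> (\<forall>n. e \<le> dist (X (r n)) L)"
proof -
  obtain e where e: "e > 0" and ne: "\<not> eventually (\<lambda>n. dist (X n) L < e) sequentially"
    using assms tendsto_iff by blast
  have "infinite {n. \<not> dist (X n) L < e}"
  proof
    assume "finite {n. \<not> dist (X n) L < e}"
    then obtain N where "\<forall>n\<in>{n. \<not> dist (X n) L < e}. n \<le> N"
      using finite_nat_set_iff_bounded_le by blast
    hence "\<forall>n\<ge>Suc N. dist (X n) L < e" by force
    thus False using ne unfolding eventually_sequentially by blast
  qed
  from infinite_enumerate[OF this] have "\<exists>r::nat\<Rightarrow>nat. strict_mono r \<and> (\<forall>n. e \<le> dist (X (r n)) L)"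
    by (auto simp: not_less)
  thus ?thesis using e by blast
qed

lemma ennreal_div_bound:
  fixes X Y :: ennreal
  assumes a: "a > 0" and d: "d \<ge> 0" and le: "ennreal a * X \<le> ennreal d + ennreal a * Y"
  shows "X \<le> ennreal (d / a) + Y"
proof -
  have one: "ennreal (1 / a) * ennreal a = 1" using a by (simp add: ennreal_mult[symmetric])
  have "X = ennreal (1 / a) * (ennreal a * X)" using one by (simp add: mult.assoc[symmetric])
  also have "\<dots> \<le> ennreal (1 / a) * (ennreal d + ennreal a * Y)" by (rule mult_left_mono[OF le]) simp
  also have "\<dots> = ennreal (1 / a) * ennreal d + Y"
    using one by (simp add: distrib_left mult.assoc[symmetric])
  also have "ennreal (1 / a) * ennreal d = ennreal (d / a)" using a d by (simp add: ennreal_mult[symmetric])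
  finally show ?thesis .
qed

theorem mainTheorem7:
  fixes K :: "'x::{real_inner, complete_space} \<Rightarrow> 'y::{real_inner, complete_space}"
    and E :: "'x \<Rightarrow> 'c::{real_inner, complete_space, second_countable_topology}"
    and Dec :: "'c \<Rightarrow> 'x"
    and \<psi> :: "'c \<Rightarrow> ennreal"
    and c :: real
    and Dist :: "'y \<Rightarrow> 'y \<Rightarrow> ennreal"
    and y :: 'y and ys :: "nat \<Rightarrow> 'y"
    and \<delta> \<alpha> :: "nat \<Rightarrow> real"
    and xs :: "nat \<Rightarrow> 'x"
  assumes A3: "weak_seq_cont K"
    and A4: "weak_seq_cont E"
    and A5: "weak_seq_cont Dec"
    and A6: "coercive_fun \<psi>" "weak_seq_lsc \<psi>"
    and c_pos: "c > 0"
    and B1: "\<And>y0 y1. Dist y0 y1 = 0 \<longleftrightarrow> y0 = y1"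
    and B2: "\<And>us u vs v. weak_conv us u \<Longrightarrow> vs \<longlonglongrightarrow> v \<Longrightarrow>
               Dist u v \<le> liminf (\<lambda>n. Dist (us n) (vs n))"
    and B3: "\<And>w ws. (\<lambda>n. Dist w (ws n)) \<longlonglongrightarrow> 0 \<Longrightarrow> ws \<longlonglongrightarrow> w"
    and B4: "\<And>w ws z. (\<lambda>n. Dist w (ws n)) \<longlonglongrightarrow> 0 \<Longrightarrow> Dist z w < \<infinity> \<Longrightarrow>
               (\<lambda>n. Dist z (ws n)) \<longlonglongrightarrow> Dist z w"
    and B5: "\<And>w a. a > 0 \<Longrightarrow> \<exists>x. tikh Dist K \<psi> E Dec c a w x < \<infinity>"
    and y_range: "y \<in> K ` domR \<psi> E Dec c"
    and delta_pos: "\<And>n. \<delta> n > 0" and delta_lim: "\<delta> \<longlonglongrightarrow> 0"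
    and data: "\<And>n. Dist y (ys n) \<le> ennreal (\<delta> n)"
    and alpha_pos: "\<And>n. \<alpha> n > 0" and alpha_lim: "\<alpha> \<longlonglongrightarrow> 0"
    and ratio_lim: "(\<lambda>n. \<delta> n / \<alpha> n) \<longlonglongrightarrow> 0"
    and minim: "\<And>n. xs n \<in> argmin (tikh Dist K \<psi> E Dec c (\<alpha> n) (ys n))"
  shows "(\<exists>x. weak_acc_point xs x)
    \<and> (\<forall>x. weak_acc_point xs x \<longrightarrow> R_min_sol K \<psi> E Dec c y x)
    \<and> (\<forall>\<tau> x. strict_mono \<tau> \<and> weak_conv (xs \<circ> \<tau>) x \<longrightarrow>
          (\<lambda>n. regR \<psi> E Dec c (xs (\<tau> n))) \<longlonglongrightarrow> regR \<psi> E Dec c x)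
    \<and> (\<forall>xd. R_min_sol K \<psi> E Dec c y xd \<and> (\<forall>z. R_min_sol K \<psi> E Dec c y z \<longrightarrow> z = xd)
          \<longrightarrow> weak_conv xs xd)"
proof -
  define R where "R = regR \<psi> E Dec c"
  obtain x0 where x0d: "x0 \<in> domR \<psi> E Dec c" and Kx0: "K x0 = y" using y_range by blast
  have Rx0: "R x0 < \<infinity>" using x0d unfolding domR_def R_def by simp
  define r0 where "r0 = enn2real (R x0)"
  have r0: "R x0 = ennreal r0" "r0 \<ge> 0" using Rx0 unfolding r0_def by (auto simp: ennreal_enn2real)
  have basic: "Dist (K (xs n)) (ys n) + ennreal (\<alpha> n) * R (xs n) \<le> ennreal (\<delta> n) + ennreal (\<alpha> n) * R z"
    if "K z = y" for z n
  proof -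
    have "tikh Dist K \<psi> E Dec c (\<alpha> n) (ys n) (xs n) \<le> tikh Dist K \<psi> E Dec c (\<alpha> n) (ys n) z"
      using minim[of n] unfolding argmin_def by blast
    also have "\<dots> = Dist y (ys n) + ennreal (\<alpha> n) * R z" unfolding tikh_def R_def using that by simp
    also have "\<dots> \<le> ennreal (\<delta> n) + ennreal (\<alpha> n) * R z" using data[of n] by (rule add_right_mono)
    finally show ?thesis unfolding tikh_def R_def .
  qed
  have Rbound: "R (xs n) \<le> ennreal (\<delta> n / \<alpha> n) + R z" if "K z = y" for z n
  proof (rule ennreal_div_bound[OF alpha_pos less_imp_le[OF delta_pos]])
    show "ennreal (\<alpha> n) * R (xs n) \<le> ennreal (\<delta> n) + ennreal (\<alpha> n) * R z"
      using order.trans[OF add_increasing[OF zero_le order_refl] basic[OF that, of n]] .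
  qed
  have Dbound: "Dist (K (xs n)) (ys n) \<le> ennreal (\<delta> n + \<alpha> n * r0)" for n
  proof -
    have "Dist (K (xs n)) (ys n) \<le> ennreal (\<delta> n) + ennreal (\<alpha> n) * R x0"
      using order.trans[OF add_increasing2[OF zero_le order_refl] basic[OF Kx0, of n]] .
    also have "ennreal (\<alpha> n) * R x0 = ennreal (\<alpha> n * r0)"
      using r0 alpha_pos[of n] by (simp add: ennreal_mult)
    also have "ennreal (\<delta> n) + ennreal (\<alpha> n * r0) = ennreal (\<delta> n + \<alpha> n * r0)"
      using ennreal_plus[of "\<delta> n" "\<alpha> n * r0"] delta_pos[of n] alpha_pos[of n] r0(2) by simp
    finally show ?thesis .
  qed
  obtain Q where Q: "\<And>n. \<delta> n / \<alpha> n \<le> Q" "Q \<ge> 0"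
  proof -
    have "Bseq (\<lambda>n. \<delta> n / \<alpha> n)" using ratio_lim by (rule convergent_imp_Bseq[OF convergentI])
    then obtain B where "B > 0" "\<And>n. norm (\<delta> n / \<alpha> n) \<le> B" by (auto elim: BseqE)
    hence "\<And>n. \<delta> n / \<alpha> n \<le> B" by (metis abs_le_D1 real_norm_def)
    thus ?thesis using \<open>B > 0\<close> by (intro that[of B]) auto
  qed
  define C where "C = Q + r0"
  have C0: "C \<ge> 0" using Q r0 by (simp add: C_def)
  have RC: "R (xs n) \<le> ennreal C" for n
  proof -
    have "R (xs n) \<le> ennreal (\<delta> n / \<alpha> n) + R x0" by (rule Rbound[OF Kx0])
    also have "\<dots> \<le> ennreal Q + ennreal r0" using Q(1)[of n] r0 by (simp add: add_right_mono ennreal_leI)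
    also have "\<dots> = ennreal C" using Q r0 by (simp add: C_def ennreal_plus)
    finally show ?thesis .
  qed
  have psiC: "\<psi> (E (xs n)) \<le> ennreal C" for n
    using order.trans[OF add_increasing2[OF zero_le order_refl] RC[of n, unfolded R_def regR_def]] .
  have wC: "norm (xs n - Dec (E (xs n))) \<le> 1 + 2 * C / c" for n
  proof -
    have "ennreal (c / 2 * (norm (xs n - Dec (E (xs n))))\<^sup>2) \<le> ennreal C"
      using order.trans[OF add_increasing[OF zero_le order_refl] RC[of n, unfolded R_def regR_def]] .
    hence "c / 2 * (norm (xs n - Dec (E (xs n))))\<^sup>2 \<le> C" using C0 by (simp add: ennreal_le_iff)
    hence "(norm (xs n - Dec (E (xs n))))\<^sup>2 \<le> 2 * C / c" using c_pos by (simp add: field_simps)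
    show ?thesis
    proof (cases "norm (xs n - Dec (E (xs n))) \<le> 1")
      case True
      have "2 * C / c \<ge> 0" using C0 c_pos by simp
      thus ?thesis using True by linarith
    next
      case False
      hence "norm (xs n - Dec (E (xs n))) \<le> (norm (xs n - Dec (E (xs n))))\<^sup>2"
        using mult_right_mono[of 1 "norm (xs n - Dec (E (xs n)))" "norm (xs n - Dec (E (xs n)))"]
        by (simp add: power2_eq_square)
      thus ?thesis using \<open>(norm (xs n - Dec (E (xs n))))\<^sup>2 \<le> 2 * C / c\<close> by linarith
    qed
  qed
  have sub: "\<exists>\<tau> x. strict_mono \<tau> \<and> weak_conv (xs \<circ> \<sigma> \<circ> \<tau>) x" if \<sigma>: "strict_mono \<sigma>" for \<sigma> :: "nat \<Rightarrow> nat"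
  proof -
    obtain M where M: "\<And>n. norm (E (xs (\<sigma> n))) \<le> M"
      using A6(1)[unfolded coercive_fun_def, rule_format, of "\<lambda>n. E (xs (\<sigma> n))"] psiC by blast
    obtain \<tau>1 e where t1: "strict_mono \<tau>1" and ec: "weak_conv ((\<lambda>n. E (xs (\<sigma> n))) \<circ> \<tau>1) e"
      using weak_compact[of "\<lambda>n. E (xs (\<sigma> n))" M] M by blast
    have dc: "weak_conv (\<lambda>n. Dec (E (xs (\<sigma> (\<tau>1 n))))) (Dec e)"
      using A5 ec unfolding weak_seq_cont_def by (auto simp: o_def)
    obtain \<tau>2 w where t2: "strict_mono \<tau>2"
      and wc: "weak_conv ((\<lambda>n. xs (\<sigma> (\<tau>1 n)) - Dec (E (xs (\<sigma> (\<tau>1 n))))) \<circ> \<tau>2) w"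
      using weak_compact[of "\<lambda>n. xs (\<sigma> (\<tau>1 n)) - Dec (E (xs (\<sigma> (\<tau>1 n))))" "1 + 2 * C / c"] wC by blast
    have "weak_conv (\<lambda>n. ((\<lambda>n. xs (\<sigma> (\<tau>1 n)) - Dec (E (xs (\<sigma> (\<tau>1 n))))) \<circ> \<tau>2) n
          + ((\<lambda>n. Dec (E (xs (\<sigma> (\<tau>1 n))))) \<circ> \<tau>2) n) (w + Dec e)"
      by (rule weak_conv_add[OF wc weak_conv_subseq[OF dc t2]])
    hence "weak_conv (xs \<circ> \<sigma> \<circ> (\<tau>1 \<circ> \<tau>2)) (w + Dec e)" by (simp add: o_def)
    moreover have "strict_mono (\<tau>1 \<circ> \<tau>2)" using t1 t2 by (rule strict_mono_o)
    ultimately show ?thesis by blast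
  qed
  have ysl: "ys \<longlonglongrightarrow> y"
  proof (rule B3)
    have "(\<lambda>n. ennreal (\<delta> n)) \<longlonglongrightarrow> ennreal 0" using delta_lim by (rule tendsto_ennrealI)
    hence d0: "(\<lambda>n. ennreal (\<delta> n)) \<longlonglongrightarrow> 0" by simp
    show "(\<lambda>n. Dist y (ys n)) \<longlonglongrightarrow> 0"
    proof (rule tendsto_sandwich[OF _ _ tendsto_const d0])
      show "\<forall>\<^sub>F n in sequentially. 0 \<le> Dist y (ys n)" by (rule always_eventually) simp
      show "\<forall>\<^sub>F n in sequentially. Dist y (ys n) \<le> ennreal (\<delta> n)"
        by (rule always_eventually, rule allI, rule data)
    qed
  qed
  have core: "R_min_sol K \<psi> E Dec c y xst \<and> (\<lambda>n. R (xs (\<tau> n))) \<longlonglongrightarrow> R xst"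
    if t: "strict_mono \<tau>" and wx: "weak_conv (xs \<circ> \<tau>) xst" for \<tau> xst
  proof -
    have Ec: "weak_conv (\<lambda>n. E (xs (\<tau> n))) (E xst)" using A4 wx unfolding weak_seq_cont_def by (auto simp: o_def)
    have DEc: "weak_conv (\<lambda>n. Dec (E (xs (\<tau> n)))) (Dec (E xst))"
      using A5 Ec unfolding weak_seq_cont_def by (auto simp: o_def)
    have wdc: "weak_conv (\<lambda>n. xs (\<tau> n) - Dec (E (xs (\<tau> n)))) (xst - Dec (E xst))"
      using weak_conv_diff[OF wx DEc] by (simp add: o_def)
    have lsc: "R xst \<le> liminf (\<lambda>n. R (xs (\<tau> n)))"
    proof -
      have "\<psi> (E xst) \<le> liminf (\<lambda>n. \<psi> (E (xs (\<tau> n))))"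
        using A6(2) Ec unfolding weak_seq_lsc_def by blast
      moreover have "ennreal (c / 2 * (norm (xst - Dec (E xst)))\<^sup>2)
          \<le> liminf (\<lambda>n. ennreal (c / 2 * (norm (xs (\<tau> n) - Dec (E (xs (\<tau> n)))))\<^sup>2))"
        using weak_norm_lsc[OF wdc] c_pos by simp
      ultimately have "R xst \<le> liminf (\<lambda>n. \<psi> (E (xs (\<tau> n))))
          + liminf (\<lambda>n. ennreal (c / 2 * (norm (xs (\<tau> n) - Dec (E (xs (\<tau> n)))))\<^sup>2))"
        unfolding R_def regR_def by (rule add_mono)
      also have "\<dots> \<le> liminf (\<lambda>n. R (xs (\<tau> n)))"
        unfolding R_def regR_def by (rule liminf_add_ennreal)
      finally show ?thesis .
    qed
    have usc: "limsup (\<lambda>n. R (xs (\<tau> n))) \<le> R z" if "K z = y" for z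
    proof -
      have "(\<lambda>n. \<delta> (\<tau> n) / \<alpha> (\<tau> n)) \<longlonglongrightarrow> 0"
        using LIMSEQ_subseq_LIMSEQ[OF ratio_lim t] by (simp add: o_def)
      hence "(\<lambda>n. ennreal (\<delta> (\<tau> n) / \<alpha> (\<tau> n))) \<longlonglongrightarrow> ennreal 0" by (rule tendsto_ennrealI)
      hence "(\<lambda>n. ennreal (\<delta> (\<tau> n) / \<alpha> (\<tau> n)) + R z) \<longlonglongrightarrow> 0 + R z"
        by (intro tendsto_add tendsto_const) simp
      hence "limsup (\<lambda>n. ennreal (\<delta> (\<tau> n) / \<alpha> (\<tau> n)) + R z) = R z"
        by (simp add: lim_imp_Limsup)
      moreover have "limsup (\<lambda>n. R (xs (\<tau> n))) \<le> limsup (\<lambda>n. ennreal (\<delta> (\<tau> n) / \<alpha> (\<tau> n)) + R z)"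
        by (rule Limsup_mono, rule always_eventually, rule allI, rule Rbound[OF that])
      ultimately show ?thesis by simp
    qed
    have lele: "liminf (\<lambda>n. R (xs (\<tau> n))) \<le> limsup (\<lambda>n. R (xs (\<tau> n)))"
      by (rule Liminf_le_Limsup) simp
    have Rxz: "R xst \<le> R z" if "K z = y" for z
      using order.trans[OF lsc order.trans[OF lele usc[OF that]]] .
    have xd: "xst \<in> domR \<psi> E Dec c"
      using Rxz[OF Kx0] Rx0 unfolding domR_def R_def by (simp add: le_less_trans)
    have Kx: "K xst = y"
    proof -
      have Kc: "weak_conv (\<lambda>n. K (xs (\<tau> n))) (K xst)" using A3 wx unfolding weak_seq_cont_def by (auto simp: o_def)
      have yc: "(\<lambda>n. ys (\<tau> n)) \<longlonglongrightarrow> y" using LIMSEQ_subseq_LIMSEQ[OF ysl t] by (simp add: o_def)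
      have "Dist (K xst) y \<le> liminf (\<lambda>n. Dist (K (xs (\<tau> n))) (ys (\<tau> n)))" by (rule B2[OF Kc yc])
      also have "\<dots> \<le> liminf (\<lambda>n. ennreal (\<delta> (\<tau> n) + \<alpha> (\<tau> n) * r0))"
        by (rule Liminf_mono, rule always_eventually, rule allI, rule Dbound)
      also have "\<dots> = 0"
      proof -
        have "(\<lambda>n. \<delta> (\<tau> n) + \<alpha> (\<tau> n) * r0) \<longlonglongrightarrow> 0 + 0 * r0"
        proof -
          have d: "(\<lambda>n. \<delta> (\<tau> n)) \<longlonglongrightarrow> 0" using LIMSEQ_subseq_LIMSEQ[OF delta_lim t] by (simp add: o_def)
          have a: "(\<lambda>n. \<alpha> (\<tau> n)) \<longlonglongrightarrow> 0" using LIMSEQ_subseq_LIMSEQ[OF alpha_lim t] by (simp add: o_def)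
          show ?thesis by (rule tendsto_add[OF d tendsto_mult[OF a tendsto_const]])
        qed
        hence "(\<lambda>n. \<delta> (\<tau> n) + \<alpha> (\<tau> n) * r0) \<longlonglongrightarrow> 0" by simp
        hence "(\<lambda>n. ennreal (\<delta> (\<tau> n) + \<alpha> (\<tau> n) * r0)) \<longlonglongrightarrow> ennreal 0"
          by (rule tendsto_ennrealI)
        thus ?thesis by (simp add: lim_imp_Liminf)
      qed
      finally have "Dist (K xst) y = 0" by simp
      thus ?thesis using B1 by blast
    qed
    have sol: "R_min_sol K \<psi> E Dec c y xst"
      unfolding R_min_sol_def using xd Kx Rxz unfolding R_def by blast
    have "liminf (\<lambda>n. R (xs (\<tau> n))) = R xst" "limsup (\<lambda>n. R (xs (\<tau> n))) = R xst"
    proof -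
      have u: "limsup (\<lambda>n. R (xs (\<tau> n))) \<le> R xst" by (rule usc[OF Kx])
      show "liminf (\<lambda>n. R (xs (\<tau> n))) = R xst" using lsc lele u by (rule_tac antisym) simp_all
      show "limsup (\<lambda>n. R (xs (\<tau> n))) = R xst" using lsc lele u by (rule_tac antisym) simp_all
    qed
    hence "(\<lambda>n. R (xs (\<tau> n))) \<longlonglongrightarrow> R xst" by (intro Liminf_eq_Limsup) simp_all
    thus ?thesis using sol by blast
  qed
  have pa: "\<exists>x. weak_acc_point xs x"
  proof -
    obtain \<tau> x where "strict_mono \<tau>" "weak_conv (xs \<circ> id \<circ> \<tau>) x"
      using sub[of id] by (auto simp: strict_mono_def)
    thus ?thesis unfolding weak_acc_point_def by auto
  qed
  have pb: "\<forall>x. weak_acc_point xs x \<longrightarrow> R_min_sol K \<psi> E Dec c y x"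
    unfolding weak_acc_point_def using core by blast
  have pc: "\<forall>\<tau> x. strict_mono \<tau> \<and> weak_conv (xs \<circ> \<tau>) x \<longrightarrow>
          (\<lambda>n. regR \<psi> E Dec c (xs (\<tau> n))) \<longlonglongrightarrow> regR \<psi> E Dec c x"
    using core unfolding R_def by blast
  have pd: "\<forall>xd. R_min_sol K \<psi> E Dec c y xd \<and> (\<forall>z. R_min_sol K \<psi> E Dec c y z \<longrightarrow> z = xd)
          \<longrightarrow> weak_conv xs xd"
  proof (intro allI impI, elim conjE)
    fix xd assume uniq: "\<forall>z. R_min_sol K \<psi> E Dec c y z \<longrightarrow> z = xd"
    show "weak_conv xs xd"
      unfolding weak_conv_def
    proof (rule ccontr)
      assume "\<not> (\<forall>z. (\<lambda>n. inner (xs n) z) \<longlonglongrightarrow> inner xd z)"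
      then obtain z where "\<not> (\<lambda>n. inner (xs n) z) \<longlonglongrightarrow> inner xd z" by blast
      from not_tendsto_subseq[OF this] obtain e and r :: "nat \<Rightarrow> nat" where e: "e > 0" and r: "strict_mono r"
        and far: "\<And>n. e \<le> dist (inner (xs (r n)) z) (inner xd z)" by blast
      obtain \<tau> x' where t: "strict_mono \<tau>" and wx: "weak_conv (xs \<circ> r \<circ> \<tau>) x'" using sub[OF r] by blast
      have rt: "strict_mono (r \<circ> \<tau>)" using r t by (rule strict_mono_o)
      have "R_min_sol K \<psi> E Dec c y x'" using core[OF rt] wx by (simp add: o_assoc)
      hence "x' = xd" using uniq by blast
      hence "(\<lambda>n. inner (xs (r (\<tau> n))) z) \<longlonglongrightarrow> inner xd z" using wx unfolding weak_conv_def by (simp add: o_def)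
      hence "\<forall>\<^sub>F n in sequentially. dist (inner (xs (r (\<tau> n))) z) (inner xd z) < e"
        using e by (rule tendstoD)
      then obtain n where "dist (inner (xs (r (\<tau> n))) z) (inner xd z) < e"
        unfolding eventually_sequentially by blast
      thus False using far[of "\<tau> n"] by simp
    qed
  qed
  show ?thesis using pa pb pc pd by blast
qed

end
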